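(* Fix $x> 0$, $y>0$. Suppose $B_\nu(x,y)$ is an upper (respectively lower) bound for $P_\nu(x,y)$ for every $\nu>0$. Then for every $\mu>0$ and every integer $n\ge 0$, $$B^{(n)}_{\mu}(x,y)=B_{\mu+n+1}(x,y)+e^{-x-y}\sum_{k=0}^{n}\left(\frac{y}{x}\right)^{\frac{\mu+k}{2}}I_{\mu+k}(2\sqrt{xy})$$ is an upper (respectively lower) bound for $P_\mu(x,y)$. If moreover $B_{\nu}(x,y)\to 0$ as $\nu\to+\infty$, then $B^{(n)}_\mu(x,y)\to P_\mu(x,y)$ as $n\to\infty$.
   Context: For $\mu>0$, $x>0$, $y\ge0$, the generalized Marcum $P$-function is $P_{\mu}(x,y)=x^{\frac12(1-\mu)}\int_0^{y} t^{\frac12(\mu-1)}e^{-t-x}I_{\mu-1}(2\sqrt{xt})\,dt$, where $I_\nu$ is the modified Bessel function of the first kind. *)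

theory Defs
  imports "HOL-Analysis.Analysis"
begin

definition bessel_I :: "real \<Rightarrow> real \<Rightarrow> real" where
  "bessel_I nu z = (\<Sum>k. (z / 2) powr (2 * real k + nu) / (fact k * Gamma (real k + nu + 1)))"

definition marcumP :: "real \<Rightarrow> real \<Rightarrow> real \<Rightarrow> real" where
  "marcumP mu x y = x powr ((1 - mu) / 2) *
     integral {0..y} (\<lambda>t. t powr ((mu - 1) / 2) * exp (- t - x) * bessel_I (mu - 1) (2 * sqrt (x * t)))"

definition Bn :: "(real \<Rightarrow> real \<Rightarrow> real \<Rightarrow> real) \<Rightarrow> nat \<Rightarrow> real \<Rightarrow> real \<Rightarrow> real \<Rightarrow> real" where
  "Bn B n mu x y = B (mu + real n + 1) x y +
     exp (- x - y) * (\<Sum>k=0..n. (y / x) powr ((mu + real k) / 2) * bessel_I (mu + real k) (2 * sqrt (x * y)))"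

end

theory Submission
  imports Defs
begin

definition cc :: "real \<Rightarrow> real \<Rightarrow> nat \<Rightarrow> real" where
  "cc x a k = x ^ k / (fact k * Gamma (real k + a + 1))"
definition pp :: "real \<Rightarrow> real \<Rightarrow> real \<Rightarrow> real" where
  "pp x a t = (\<Sum>k. cc x a k * t ^ k)"
definition hh :: "real \<Rightarrow> real \<Rightarrow> real \<Rightarrow> real" where
  "hh x a t = t powr a * pp x a t"

lemma cc_nonneg: "x \<ge> 0 \<Longrightarrow> a > -1 \<Longrightarrow> cc x a k \<ge> 0"
  unfolding cc_def by (intro divide_nonneg_pos) auto

lemma cc_Suc: assumes "a > -1"
  shows "cc x a (Suc k) = cc x a k * (x / ((real k + 1) * (real k + a + 1)))"
proof -
  have "Gamma (real (Suc k) + a + 1) = (real k + a + 1) * Gamma (real k + a + 1)"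
    using Gamma_plus1[of "real k + a + 1"] assms
    by (simp add: nonpos_Ints_def algebra_simps)
  then show ?thesis unfolding cc_def using assms
    by (simp add: field_simps)
qed

lemma summable_cc: assumes "a > -1" shows "summable (\<lambda>k. cc x a k * t ^ k)"
proof (rule summable_ratio_test[where c="1/2" and N="nat \<lceil>2 * \<bar>x * t\<bar>\<rceil> + 1"])
  fix n assume n: "n \<ge> nat \<lceil>2 * \<bar>x * t\<bar>\<rceil> + 1"
  have n1: "real n \<ge> 1" and n2: "real n \<ge> 2 * \<bar>x * t\<bar>" using n by linarith+
  have pos: "(real n + 1) * (real n + a + 1) \<ge> 2 * \<bar>x * t\<bar>"
  proof -
    have "(real n + 1) * (real n + a + 1) \<ge> real n * 1"
      using n1 assms by (intro mult_mono) auto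
    then show ?thesis using n2 by linarith
  qed
  have p2: "(real n + 1) * (real n + a + 1) > 0" using n1 assms by auto
  have "norm (cc x a (Suc n) * t ^ Suc n) = norm (cc x a n * t ^ n) * (\<bar>x * t\<bar> / ((real n + 1) * (real n + a + 1)))"
    using p2 by (simp add: cc_Suc[OF assms] abs_mult field_simps)
  also have "\<dots> \<le> norm (cc x a n * t ^ n) * (1/2)"
    using pos p2 by (intro mult_left_mono) (auto simp: field_simps)
  finally show "norm (cc x a (Suc n) * t ^ Suc n) \<le> 1/2 * norm (cc x a n * t ^ n)" by simp
qed auto

lemma bessel_hh:
  assumes x: "x > 0" and t: "t > 0" and a: "a > -1"
  shows "(t / x) powr (a / 2) * bessel_I a (2 * sqrt (x * t)) = hh x a t"
proof -
  have e: "(t / x) powr (a / 2) * ((2 * sqrt (x * t) / 2) powr (2 * real k + a) / (fact k * Gamma (real k + a + 1)))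
        = t powr a * (cc x a k * t ^ k)" for k
  proof -
    have "sqrt (x*t) powr (2 * real k + a) = sqrt (x*t) powr (2 * real k) * sqrt (x*t) powr a"
      by (simp add: powr_add)
    also have "sqrt (x*t) powr (2 * real k) = (x*t)^k"
      using x t by (simp add: powr_powr[symmetric] powr_realpow sqrt_def real_root_pos2 powr_half_sqrt[symmetric])
    also have "sqrt (x*t) powr a = (x*t) powr (a/2)"
      using x t by (simp add: powr_half_sqrt[symmetric] powr_powr)
    finally have 1: "sqrt (x*t) powr (2 * real k + a) = (x*t)^k * (x*t) powr (a/2)" .
    have 2: "(t / x) powr (a / 2) * (x*t) powr (a/2) = t powr a"
    proof -
      have "(t / x) powr (a / 2) * (x*t) powr (a/2) = (t*t) powr (a/2)"
        using x t by (simp add: powr_mult[symmetric])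
      also have "\<dots> = t powr (a/2) * t powr (a/2)" using t by (simp add: powr_mult)
      also have "\<dots> = t powr a" by (simp add: powr_add[symmetric])
      finally show ?thesis .
    qed
    have 3: "2 * sqrt (x * t) / 2 = sqrt (x*t)" by simp
    have "(t / x) powr (a / 2) * ((2 * sqrt (x * t) / 2) powr (2 * real k + a))
          = ((t / x) powr (a / 2) * (x*t) powr (a/2)) * (x*t)^k" unfolding 3 1 by simp
    also have "\<dots> = t powr a * (x^k * t^k)" unfolding 2 by (simp add: power_mult_distrib)
    finally show ?thesis unfolding cc_def by (simp add: field_simps)
  qed
  have s: "summable (\<lambda>k. t powr a * (cc x a k * t ^ k))" using summable_cc[OF a] by (rule summable_mult)
  define C where "C = (t / x) powr (a / 2)"
  define f where "f k = (2 * sqrt (x * t) / 2) powr (2 * real k + a) / (fact k * Gamma (real k + a + 1))" for k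
  have C: "C \<noteq> 0" using x t by (simp add: C_def)
  have "(\<lambda>k. t powr a * (cc x a k * t ^ k)) sums (t powr a * pp x a t)"
    unfolding pp_def using summable_cc[OF a] by (intro sums_mult summable_sums)
  then have "(\<lambda>k. C * f k) sums (t powr a * pp x a t)" using e by (simp add: C_def f_def)
  then have "(\<lambda>k. C * f k / C) sums (t powr a * pp x a t / C)" by (rule sums_divide)
  then have "f sums (t powr a * pp x a t / C)" using C by simp
  then have "C * suminf f = t powr a * pp x a t" using C by (simp add: sums_iff)
  then show ?thesis unfolding bessel_I_def hh_def C_def f_def .
qed

lemma cc_shift: assumes "a > 0" shows "(a + real n) * cc x a n = cc x (a - 1) n"
proof -
  have "Gamma (real n + a + 1) = (real n + a) * Gamma (real n + a)"
    using Gamma_plus1[of "real n + a"] assms by (simp add: nonpos_Ints_def algebra_simps)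
  moreover have "Gamma (real n + a) > 0" using assms by simp
  moreover have "real n + a > 0" using assms by simp
  ultimately show ?thesis using assms unfolding cc_def
    by (simp add: divide_simps del: of_nat_add)
qed

lemma pp_deriv: assumes "a > -1"
  shows "(pp x a has_real_derivative (\<Sum>n. diffs (cc x a) n * t ^ n)) (at t)"
  unfolding pp_def[abs_def] using summable_cc[OF assms]
  by (intro termdiffs_strong_converges_everywhere) auto

lemma pp_shift: assumes "a > 0"
  shows "a * pp x a t + t * (\<Sum>n. diffs (cc x a) n * t ^ n) = pp x (a - 1) t"
proof -
  have sa: "-1 < a" using assms by simp
  define f where "f n = real n * cc x a n * t ^ n" for n
  have "summable (\<lambda>n. diffs (cc x a) n * t ^ n)"
    using summable_cc[OF sa] by (intro termdiff_converges_all) auto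
  then have "(\<lambda>n. t * (diffs (cc x a) n * t ^ n)) sums (t * (\<Sum>n. diffs (cc x a) n * t ^ n))"
    by (intro sums_mult summable_sums)
  moreover have "(\<lambda>n. t * (diffs (cc x a) n * t ^ n)) = (\<lambda>n. f (Suc n))"
    by (auto simp: f_def diffs_def algebra_simps)
  ultimately have "f sums (t * (\<Sum>n. diffs (cc x a) n * t ^ n) + f 0)"
    by (simp add: sums_Suc_iff)
  then have 1: "f sums (t * (\<Sum>n. diffs (cc x a) n * t ^ n))" by (simp add: f_def)
  have 2: "(\<lambda>n. a * (cc x a n * t ^ n)) sums (a * pp x a t)"
    unfolding pp_def using summable_cc[OF sa] by (intro sums_mult summable_sums)
  have "(\<lambda>n. a * (cc x a n * t ^ n) + f n) sums (a * pp x a t + t * (\<Sum>n. diffs (cc x a) n * t ^ n))"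
    using sums_add[OF 2 1] .
  moreover have "(\<lambda>n. a * (cc x a n * t ^ n) + f n) = (\<lambda>n. cc x (a - 1) n * t ^ n)"
  proof
    fix n
    have "a * (cc x a n * t ^ n) + f n = ((a + real n) * cc x a n) * t ^ n"
      unfolding f_def by (simp add: algebra_simps)
    then show "a * (cc x a n * t ^ n) + f n = cc x (a - 1) n * t ^ n"
      by (simp only: cc_shift[OF assms])
  qed
  ultimately show ?thesis unfolding pp_def by (simp add: sums_iff)
qed

lemma hh_deriv: assumes "a > 0" "t > 0"
  shows "(hh x a has_real_derivative hh x (a - 1) t) (at t)"
proof -
  have sa: "-1 < a" using assms by simp
  have "(hh x a has_real_derivative (a * t powr (a - 1) * pp x a t + t powr a * (\<Sum>n. diffs (cc x a) n * t ^ n))) (at t)"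
    unfolding hh_def[abs_def] using has_real_derivative_powr[OF assms(2)] pp_deriv[OF sa] assms(2)
    by (auto intro!: derivative_eq_intros)
  moreover have "t powr a = t powr (a - 1) * t"
    using assms powr_add[of t "a - 1" 1] by simp
  moreover have "a * t powr (a - 1) * pp x a t + t powr a * (\<Sum>n. diffs (cc x a) n * t ^ n)
     = t powr (a - 1) * (a * pp x a t + t * (\<Sum>n. diffs (cc x a) n * t ^ n))"
    unfolding calculation(2) by (simp only: algebra_simps)
  ultimately show ?thesis unfolding hh_def pp_shift[OF assms(1)] by simp
qed

lemma pp_cont: assumes "a > -1" shows "continuous_on S (pp x a)"
  unfolding pp_def[abs_def] using summable_cc[OF assms]
  by (intro continuous_at_imp_continuous_on ballI isCont_powser_converges_everywhere) auto

lemma hh_cont: assumes "a > 0" shows "continuous_on {0..} (hh x a)"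
  unfolding hh_def[abs_def] using assms
  by (intro continuous_intros continuous_on_powr' pp_cont) auto

definition ff :: "real \<Rightarrow> real \<Rightarrow> real \<Rightarrow> real" where
  "ff x nu t = exp (- t - x) * hh x (nu - 1) t"

lemma ff_rec:
  assumes x: "x > 0" and y: "y > 0" and mu: "mu > 0"
  shows "ff x mu integrable_on {0..y}"
    "integral {0..y} (ff x mu) - integral {0..y} (ff x (mu + 1)) = exp (- x - y) * hh x mu y"
proof -
  define G where "G t = - exp (- t - x) * hh x mu t" for t
  have cG: "continuous_on {0..y} G"
    unfolding G_def using continuous_on_subset[OF hh_cont[OF mu]]
    by (intro continuous_intros) auto
  have dG: "(G has_vector_derivative (ff x (mu + 1) t - ff x mu t)) (at t)" if "t \<in> {0<..<y}" for t
  proof -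
    have t: "t > 0" using that by simp
    have "(G has_real_derivative (exp (- t - x) * hh x mu t - exp (- t - x) * hh x (mu - 1) t)) (at t)"
      unfolding G_def[abs_def] using hh_deriv[OF mu t]
      by (auto intro!: derivative_eq_intros simp: algebra_simps)
    then show ?thesis unfolding ff_def by (simp add: has_real_derivative_iff_has_vector_derivative)
  qed
  have I: "((\<lambda>t. ff x (mu + 1) t - ff x mu t) has_integral (G y - G 0)) {0..y}"
    using fundamental_theorem_of_calculus_interior[OF _ cG dG] y by simp
  have "G y - G 0 = - exp (- x - y) * hh x mu y"
    unfolding G_def hh_def using mu by (simp add: algebra_simps)
  note I = I[unfolded this]
  have i1: "ff x (mu + 1) integrable_on {0..y}"
    unfolding ff_def using continuous_on_subset[OF hh_cont[OF mu]]
    by (intro integrable_continuous_interval continuous_intros) auto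
  have "(\<lambda>t. ff x (mu + 1) t - (ff x (mu + 1) t - ff x mu t)) integrable_on {0..y}"
    using integrable_diff[OF i1 has_integral_integrable[OF I]] .
  then show i2: "ff x mu integrable_on {0..y}" by simp
  have "integral {0..y} (\<lambda>t. ff x (mu + 1) t - ff x mu t) = - exp (- x - y) * hh x mu y"
    using I by (rule integral_unique)
  then show "integral {0..y} (ff x mu) - integral {0..y} (ff x (mu + 1)) = exp (- x - y) * hh x mu y"
    using integral_diff[OF i1 i2] by simp
qed

lemma marcumP_ff:
  assumes x: "x > 0" and nu: "nu > 0"
  shows "marcumP nu x y = integral {0..y} (ff x nu)"
proof -
  have "marcumP nu x y = integral {0..y} (\<lambda>t. x powr ((1 - nu) / 2) *
     (t powr ((nu - 1) / 2) * exp (- t - x) * bessel_I (nu - 1) (2 * sqrt (x * t))))"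
    unfolding marcumP_def by simp
  also have "\<dots> = integral {0..y} (ff x nu)"
  proof (rule integral_cong)
    fix t assume "t \<in> {0..y}"
    then have "t = 0 \<or> t > 0" by auto
    then show "x powr ((1 - nu) / 2) *
     (t powr ((nu - 1) / 2) * exp (- t - x) * bessel_I (nu - 1) (2 * sqrt (x * t))) = ff x nu t"
    proof
      assume "t = 0" then show ?thesis by (simp add: ff_def hh_def)
    next
      assume t: "t > 0"
      have "x powr ((1 - nu) / 2) * t powr ((nu - 1) / 2) = (t / x) powr ((nu - 1) / 2)"
      proof -
        have "x powr ((1 - nu) / 2) * x powr ((nu - 1) / 2) = 1"
          using x by (simp add: powr_add[symmetric] diff_divide_distrib)
        then show ?thesis using x t by (simp add: powr_divide divide_simps)
      qed
      then have "x powr ((1 - nu) / 2) *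
        (t powr ((nu - 1) / 2) * exp (- t - x) * bessel_I (nu - 1) (2 * sqrt (x * t)))
        = exp (- t - x) * ((t / x) powr ((nu - 1) / 2) * bessel_I (nu - 1) (2 * sqrt (x * t)))"
        by (simp add: algebra_simps)
      also have "\<dots> = ff x nu t" unfolding ff_def using bessel_hh[OF x t, of "nu - 1"] nu by simp
      finally show ?thesis .
    qed
  qed
  finally show ?thesis .
qed

lemma Bn_hh:
  assumes x: "x > 0" and y: "y > 0" and mu: "mu > 0"
  shows "Bn B n mu x y = B (mu + real n + 1) x y + exp (- x - y) * (\<Sum>k=0..n. hh x (mu + real k) y)"
  unfolding Bn_def using bessel_hh[OF x y, of "mu + real _"] mu
  by (intro arg_cong2[where f="(+)"] arg_cong2[where f="(*)"] refl sum.cong) auto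

lemma P_sum:
  assumes x: "x > 0" and y: "y > 0" and mu: "mu > 0"
  shows "marcumP mu x y = marcumP (mu + real n + 1) x y + exp (- x - y) * (\<Sum>k=0..n. hh x (mu + real k) y)"
proof (induction n)
  case 0
  show ?case using ff_rec(2)[OF x y mu] marcumP_ff[OF x, of mu] marcumP_ff[OF x, of "mu + 1"] mu
    by simp
next
  case (Suc n)
  have m: "mu + real n + 1 > 0" using mu by simp
  have "marcumP (mu + real n + 1) x y = marcumP (mu + real (Suc n) + 1) x y + exp (- x - y) * hh x (mu + real (Suc n)) y"
    using ff_rec(2)[OF x y m] marcumP_ff[OF x m, of y] marcumP_ff[OF x, of "mu + real n + 1 + 1" y] m
    by (simp add: algebra_simps)
  then show ?case using Suc by (simp add: algebra_simps)
qed

lemma pp_nonneg: "x \<ge> 0 \<Longrightarrow> a > -1 \<Longrightarrow> t \<ge> 0 \<Longrightarrow> pp x a t \<ge> 0"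
  unfolding pp_def by (intro suminf_nonneg summable_cc) (auto intro: mult_nonneg_nonneg cc_nonneg)

lemma hh_nonneg: "x \<ge> 0 \<Longrightarrow> a > -1 \<Longrightarrow> t \<ge> 0 \<Longrightarrow> hh x a t \<ge> 0"
  unfolding hh_def by (intro mult_nonneg_nonneg pp_nonneg) auto

lemma pp_mono: "x \<ge> 0 \<Longrightarrow> a > -1 \<Longrightarrow> 0 \<le> t \<Longrightarrow> t \<le> y \<Longrightarrow> pp x a t \<le> pp x a y"
  unfolding pp_def by (intro suminf_le summable_cc) (auto intro!: mult_left_mono power_mono cc_nonneg)

lemma hh_mono: "x \<ge> 0 \<Longrightarrow> a > 0 \<Longrightarrow> 0 \<le> t \<Longrightarrow> t \<le> y \<Longrightarrow> hh x a t \<le> hh x a y"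
  unfolding hh_def by (intro mult_mono pp_mono powr_mono2 pp_nonneg) auto

lemma Gamma_ge: "b \<ge> 1 \<Longrightarrow> fact m * Gamma b \<le> Gamma (b + real m)"
proof (induction m)
  case 0 then show ?case by simp
next
  case (Suc m)
  have "Gamma (b + real (Suc m)) = (b + real m) * Gamma (b + real m)"
    using Gamma_plus1[of "b + real m"] Suc.prems by (simp add: nonpos_Ints_def algebra_simps)
  moreover have "fact (Suc m) * Gamma b = (real m + 1) * (fact m * Gamma b)" by simp
  moreover have "(real m + 1) * (fact m * Gamma b) \<le> (b + real m) * Gamma (b + real m)"
    using Suc by (intro mult_mono) (auto intro: mult_nonneg_nonneg less_imp_le[OF Gamma_real_pos])
  ultimately show ?case by (simp add: mult.assoc add.commute)
qed

lemma pp_bound: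
  assumes x: "x > 0" and y: "y > 0" and mu: "mu > 0"
  shows "pp x (mu + real n) y \<le> exp (x * y) / (fact n * Gamma (mu + 1))"
proof -
  have G: "Gamma (mu + 1) > 0" using mu by simp
  have le: "cc x (mu + real n) k * y ^ k \<le> ((x*y)^k / fact k) / (fact n * Gamma (mu + 1))" for k
  proof -
    have "fact n * Gamma (mu + 1) \<le> fact (k + n) * Gamma (mu + 1)"
      using G by (intro mult_right_mono) (auto intro: fact_mono)
    also have "\<dots> \<le> Gamma (mu + 1 + real (k + n))" using Gamma_ge[of "mu+1" "k+n"] mu by simp
    finally have g: "fact n * Gamma (mu + 1) \<le> Gamma (real k + (mu + real n) + 1)"
      by (simp add: algebra_simps)
    have pos: "0 < fact n * Gamma (mu + 1)" using G by simp
    have e1: "cc x (mu + real n) k * y ^ k = (x*y)^k / (fact k * Gamma (real k + (mu + real n) + 1))"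
      unfolding cc_def by (simp add: power_mult_distrib)
    have e2: "((x*y)^k / fact k) / (fact n * Gamma (mu + 1)) = (x*y)^k / (fact k * (fact n * Gamma (mu + 1)))"
      by simp
    show ?thesis
    proof -
      have Gp: "Gamma (real k + (mu + real n) + 1) > 0" using mu by (intro Gamma_real_pos) simp
      show ?thesis unfolding e1 e2 using g pos x y
        by (intro divide_left_mono mult_left_mono mult_pos_pos) (auto simp: G Gp)
    qed
  qed
  have "(\<lambda>k. ((x*y)^k / fact k) / (fact n * Gamma (mu + 1))) sums (exp (x * y) / (fact n * Gamma (mu + 1)))"
    using exp_converges[of "x*y"] by (intro sums_divide) (simp add: divide_inverse mult.commute)
  then have "(\<Sum>k. cc x (mu + real n) k * y ^ k) \<le> (\<Sum>k. ((x*y)^k / fact k) / (fact n * Gamma (mu + 1)))"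
    using le mu summable_cc[of "mu + real n" x y] by (intro suminf_le) (auto simp: sums_iff)
  then show ?thesis unfolding pp_def using \<open>_ sums _\<close> by (simp add: sums_iff)
qed

lemma P_tendsto0:
  assumes x: "x > 0" and y: "y > 0" and mu: "mu > 0"
  shows "(\<lambda>n. marcumP (mu + real n + 1) x y) \<longlonglongrightarrow> 0"
proof (rule real_tendsto_sandwich[where f="\<lambda>_. 0" and h="\<lambda>n. y * (y powr mu * exp (x*y) / Gamma (mu + 1)) * (y ^ n / fact n)"])
  have Pn: "marcumP (mu + real n + 1) x y = integral {0..y} (ff x (mu + real n + 1))" for n
    using marcumP_ff[OF x, of "mu + real n + 1"] mu by simp
  have int: "ff x (mu + real n + 1) integrable_on {0..y}" for n
    using ff_rec(1)[OF x y, of "mu + real n + 1"] mu by simp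
  have ffnn: "0 \<le> ff x (mu + real n + 1) t" if "t \<in> {0..y}" for n t
    unfolding ff_def using that mu x by (intro mult_nonneg_nonneg hh_nonneg) auto
  show "\<forall>\<^sub>F n in sequentially. 0 \<le> marcumP (mu + real n + 1) x y"
    unfolding Pn using int ffnn by (intro always_eventually allI integral_nonneg) auto
  show "\<forall>\<^sub>F n in sequentially. marcumP (mu + real n + 1) x y
     \<le> y * (y powr mu * exp (x*y) / Gamma (mu + 1)) * (y ^ n / fact n)"
  proof (intro always_eventually allI)
    fix n
    have "ff x (mu + real n + 1) t \<le> hh x (mu + real n) y" if "t \<in> {0..y}" for t
    proof -
      have "ff x (mu + real n + 1) t \<le> 1 * hh x (mu + real n) t"
      proof -
        have "exp (- t - x) \<le> 1" using that x by simp
        moreover have "hh x (mu + real n) t \<ge> 0" using that x mu by (intro hh_nonneg) auto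
        ultimately show ?thesis unfolding ff_def using mult_right_mono[of "exp (- t - x)" 1 "hh x (mu + real n) t"] by simp
      qed
      also have "\<dots> \<le> hh x (mu + real n) y" using hh_mono[of x "mu + real n" t y] that x mu by simp
      finally show ?thesis .
    qed
    then have "integral {0..y} (ff x (mu + real n + 1)) \<le> integral {0..y} (\<lambda>_. hh x (mu + real n) y)"
      using int by (intro integral_le) auto
    also have "\<dots> = y * hh x (mu + real n) y" using y by simp
    also have "hh x (mu + real n) y \<le> y powr (mu + real n) * (exp (x * y) / (fact n * Gamma (mu + 1)))"
      unfolding hh_def using pp_bound[OF x y mu, of n] by (intro mult_left_mono) auto
    also have "y powr (mu + real n) = y powr mu * y ^ n" using y by (simp add: powr_add powr_realpow)
    finally show "marcumP (mu + real n + 1) x y \<le> y * (y powr mu * exp (x*y) / Gamma (mu + 1)) * (y ^ n / fact n)"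
      unfolding Pn using y by (simp add: field_simps)
  qed
  have "(\<lambda>n. y ^ n / fact n) \<longlonglongrightarrow> 0"
    using exp_converges[of y] by (intro summable_LIMSEQ_zero) (auto simp: sums_iff divide_inverse mult.commute)
  then show "(\<lambda>n. y * (y powr mu * exp (x*y) / Gamma (mu + 1)) * (y ^ n / fact n)) \<longlonglongrightarrow> 0"
    by (intro tendsto_mult_right_zero)
qed auto


theorem proposition2:
  fixes x y :: real and B :: "real \<Rightarrow> real \<Rightarrow> real \<Rightarrow> real"
  assumes "x > 0" and "y > 0"
  shows "((\<forall>nu>0. marcumP nu x y \<le> B nu x y) \<longrightarrow>
            (\<forall>mu>0. \<forall>n::nat. marcumP mu x y \<le> Bn B n mu x y))
       \<and> ((\<forall>nu>0. B nu x y \<le> marcumP nu x y) \<longrightarrow>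
            (\<forall>mu>0. \<forall>n::nat. Bn B n mu x y \<le> marcumP mu x y))
       \<and> (((\<forall>nu>0. marcumP nu x y \<le> B nu x y) \<or> (\<forall>nu>0. B nu x y \<le> marcumP nu x y))
            \<and> ((\<lambda>nu. B nu x y) \<longlongrightarrow> 0) at_top \<longrightarrow>
            (\<forall>mu>0. (\<lambda>n. Bn B n mu x y) \<longlonglongrightarrow> marcumP mu x y))"
proof (intro conjI impI allI)
  fix mu :: real and n :: nat
  assume H: "\<forall>nu>0. marcumP nu x y \<le> B nu x y" and mu: "mu > 0"
  have "marcumP (mu + real n + 1) x y \<le> B (mu + real n + 1) x y" using H mu by simp
  then show "marcumP mu x y \<le> Bn B n mu x y"
    unfolding P_sum[OF assms mu, of n] Bn_hh[OF assms mu] by simp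
next
  fix mu :: real and n :: nat
  assume H: "\<forall>nu>0. B nu x y \<le> marcumP nu x y" and mu: "mu > 0"
  have "B (mu + real n + 1) x y \<le> marcumP (mu + real n + 1) x y" using H mu by simp
  then show "Bn B n mu x y \<le> marcumP mu x y"
    unfolding P_sum[OF assms mu, of n] Bn_hh[OF assms mu] by simp
next
  fix mu :: real
  assume H: "((\<forall>nu>0. marcumP nu x y \<le> B nu x y) \<or> (\<forall>nu>0. B nu x y \<le> marcumP nu x y))
            \<and> ((\<lambda>nu. B nu x y) \<longlongrightarrow> 0) at_top" and mu: "mu > 0"
  have F: "filterlim (\<lambda>n. mu + real n + 1) at_top sequentially"
    by (rule filterlim_at_top_mono[OF filterlim_real_sequentially]) (use mu in auto)
  have tB: "(\<lambda>n. B (mu + real n + 1) x y) \<longlonglongrightarrow> 0"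
    using filterlim_compose[OF conjunct2[OF H] F] by simp
  have e: "Bn B n mu x y = marcumP mu x y + (B (mu + real n + 1) x y - marcumP (mu + real n + 1) x y)" for n
    unfolding P_sum[OF assms mu, of n] Bn_hh[OF assms mu] by simp
  have "(\<lambda>n. marcumP mu x y + (B (mu + real n + 1) x y - marcumP (mu + real n + 1) x y)) \<longlonglongrightarrow> marcumP mu x y + (0 - 0)"
    by (intro tendsto_add tendsto_const tendsto_diff tB P_tendsto0 assms mu)
  then show "(\<lambda>n. Bn B n mu x y) \<longlonglongrightarrow> marcumP mu x y" unfolding e by simp
qed

end
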